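(* Let $G$ be a finite group. Then: (a) $\mathrm{Pow}(G)$ is a null graph if and only if $G$ is trivial. (b) $\mathrm{NGen}(G)$ is a complete graph if and only if $G$ is not $2$-generated. (c) $\mathrm{NGen}(G)=\mathrm{Com}(G)$ if and only if $G$ is either abelian and not $2$-generated, or a minimal non-abelian group.
   Context: Graphs have vertex set $G$ and no loops. $\mathrm{Pow}(G)$: distinct $x,y$ adjacent iff one is a power of the other. $\mathrm{Com}(G)$: adjacent iff $xy=yx$. $\mathrm{NGen}(G)$: adjacent iff $\langle x,y\rangle\ne G$. A null graph has no edges. A minimal non-abelian group is a non-abelian group all of whose proper subgroups are abelian. *)

theory Defs
  imports "HOL-Algebra.Algebra"
begin

text \<open>Graphs on the vertex set carrier G, given by a symmetric loop-free adjacency predicate.\<close>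

definition pow_adj :: "('a, 'b) monoid_scheme \<Rightarrow> 'a \<Rightarrow> 'a \<Rightarrow> bool" where
  "pow_adj G x y \<longleftrightarrow> x \<noteq> y \<and>
     ((\<exists>k::int. x = y [^]\<^bsub>G\<^esub> k) \<or> (\<exists>k::int. y = x [^]\<^bsub>G\<^esub> k))"

definition com_adj :: "('a, 'b) monoid_scheme \<Rightarrow> 'a \<Rightarrow> 'a \<Rightarrow> bool" where
  "com_adj G x y \<longleftrightarrow> x \<noteq> y \<and> x \<otimes>\<^bsub>G\<^esub> y = y \<otimes>\<^bsub>G\<^esub> x"

definition ngen_adj :: "('a, 'b) monoid_scheme \<Rightarrow> 'a \<Rightarrow> 'a \<Rightarrow> bool" where
  "ngen_adj G x y \<longleftrightarrow> x \<noteq> y \<and> generate G {x, y} \<noteq> carrier G"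

definition null_graph :: "'a set \<Rightarrow> ('a \<Rightarrow> 'a \<Rightarrow> bool) \<Rightarrow> bool" where
  "null_graph V E \<longleftrightarrow> (\<forall>x\<in>V. \<forall>y\<in>V. \<not> E x y)"

definition complete_graph :: "'a set \<Rightarrow> ('a \<Rightarrow> 'a \<Rightarrow> bool) \<Rightarrow> bool" where
  "complete_graph V E \<longleftrightarrow> (\<forall>x\<in>V. \<forall>y\<in>V. x \<noteq> y \<longrightarrow> E x y)"

definition same_graph :: "'a set \<Rightarrow> ('a \<Rightarrow> 'a \<Rightarrow> bool) \<Rightarrow> ('a \<Rightarrow> 'a \<Rightarrow> bool) \<Rightarrow> bool" where
  "same_graph V E F \<longleftrightarrow> (\<forall>x\<in>V. \<forall>y\<in>V. E x y \<longleftrightarrow> F x y)"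

definition two_generated :: "('a, 'b) monoid_scheme \<Rightarrow> bool" where
  "two_generated G \<longleftrightarrow> (\<exists>x\<in>carrier G. \<exists>y\<in>carrier G. generate G {x, y} = carrier G)"

definition minimal_nonabelian :: "('a, 'b) monoid_scheme \<Rightarrow> bool" where
  "minimal_nonabelian G \<longleftrightarrow> group G \<and> \<not> comm_group G \<and>
     (\<forall>H. subgroup H G \<and> H \<noteq> carrier G \<longrightarrow>
        (\<forall>x\<in>H. \<forall>y\<in>H. x \<otimes>\<^bsub>G\<^esub> y = y \<otimes>\<^bsub>G\<^esub> x))"

end

theory Submission
  imports Defs
begin

lemma (in group) centr_subgroup:
  assumes a: "a \<in> carrier G"
  shows "subgroup {g \<in> carrier G. g \<otimes> a = a \<otimes> g} G"
proof (rule subgroupI)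
  show "{g \<in> carrier G. g \<otimes> a = a \<otimes> g} \<subseteq> carrier G" by auto
  show "{g \<in> carrier G. g \<otimes> a = a \<otimes> g} \<noteq> {}" using a by auto
next
  fix g assume g: "g \<in> {g \<in> carrier G. g \<otimes> a = a \<otimes> g}"
  hence gc: "g \<in> carrier G" and e: "g \<otimes> a = a \<otimes> g" by auto
  have "inv g \<otimes> a = inv g \<otimes> (a \<otimes> g) \<otimes> inv g"
    using gc a by (simp add: m_assoc)
  also have "\<dots> = inv g \<otimes> (g \<otimes> a) \<otimes> inv g" using e by simp
  also have "\<dots> = a \<otimes> inv g" using gc a by (simp add: m_assoc[symmetric])
  finally show "inv g \<in> {g \<in> carrier G. g \<otimes> a = a \<otimes> g}" using gc by auto
next
  fix g h assume "g \<in> {g \<in> carrier G. g \<otimes> a = a \<otimes> g}" "h \<in> {g \<in> carrier G. g \<otimes> a = a \<otimes> g}"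
  hence gc: "g \<in> carrier G" "h \<in> carrier G" and e: "g \<otimes> a = a \<otimes> g" "h \<otimes> a = a \<otimes> h" by auto
  have "g \<otimes> h \<otimes> a = g \<otimes> (a \<otimes> h)" using gc a e by (simp add: m_assoc)
  also have "\<dots> = a \<otimes> g \<otimes> h" using gc a e by (simp add: m_assoc[symmetric])
  finally show "g \<otimes> h \<in> {g \<in> carrier G. g \<otimes> a = a \<otimes> g}" using gc a by (auto simp: m_assoc)
qed

lemma (in group) commuting_gen_comm:
  assumes x: "x \<in> carrier G" and y: "y \<in> carrier G" and c: "x \<otimes> y = y \<otimes> x"
    and g: "generate G {x, y} = carrier G"
  shows "comm_group G"
proof -
  have cen: "\<forall>h\<in>carrier G. h \<otimes> a = a \<otimes> h" if "a \<in> {x, y}" for a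
  proof -
    have "{x, y} \<subseteq> {g \<in> carrier G. g \<otimes> a = a \<otimes> g}" using that x y c by auto
    moreover have "a \<in> carrier G" using that x y by blast
    ultimately have "generate G {x, y} \<subseteq> {g \<in> carrier G. g \<otimes> a = a \<otimes> g}"
      by (intro generate_subgroup_incl centr_subgroup)
    thus ?thesis using g by auto
  qed
  have sZ: "subgroup {g \<in> carrier G. \<forall>h\<in>carrier G. h \<otimes> g = g \<otimes> h} G"
  proof -
    have "{g \<in> carrier G. \<forall>h\<in>carrier G. h \<otimes> g = g \<otimes> h}
        = (\<Inter>h\<in>carrier G. {g \<in> carrier G. g \<otimes> h = h \<otimes> g})"
      by auto
    moreover have "subgroup (\<Inter>h\<in>carrier G. {g \<in> carrier G. g \<otimes> h = h \<otimes> g}) G"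
      apply (rule subgroups_Inter)
      using centr_subgroup one_closed by blast+
    ultimately show ?thesis by simp
  qed
  have "{x, y} \<subseteq> {g \<in> carrier G. \<forall>h\<in>carrier G. h \<otimes> g = g \<otimes> h}" using cen x y by auto
  hence "generate G {x, y} \<subseteq> {g \<in> carrier G. \<forall>h\<in>carrier G. h \<otimes> g = g \<otimes> h}"
    by (intro generate_subgroup_incl sZ)
  hence "\<forall>a\<in>carrier G. \<forall>b\<in>carrier G. a \<otimes> b = b \<otimes> a" using g by auto
  thus ?thesis by (intro group_comm_groupI) auto
qed

lemma (in group) main_aux:
  shows "(null_graph (carrier G) (pow_adj G) \<longleftrightarrow> carrier G = {\<one>\<^bsub>G\<^esub>})
       \<and> (carrier G \<noteq> {\<one>\<^bsub>G\<^esub>} \<longrightarrow>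
            (complete_graph (carrier G) (ngen_adj G) \<longleftrightarrow> \<not> two_generated G))
       \<and> (carrier G \<noteq> {\<one>\<^bsub>G\<^esub>} \<longrightarrow>
            (same_graph (carrier G) (ngen_adj G) (com_adj G) \<longleftrightarrow>
               ((comm_group G \<and> \<not> two_generated G) \<or> minimal_nonabelian G)))"
proof -
  have nontriv: "\<exists>x\<in>carrier G. x \<noteq> \<one>" if "carrier G \<noteq> {\<one>}"
    using that one_closed by blast
  have A: "null_graph (carrier G) (pow_adj G) \<longleftrightarrow> carrier G = {\<one>}"
  proof
    assume n: "null_graph (carrier G) (pow_adj G)"
    show "carrier G = {\<one>}"
    proof (rule ccontr)
      assume "carrier G \<noteq> {\<one>}"
      then obtain x where x: "x \<in> carrier G" "x \<noteq> \<one>" using nontriv by blast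
      have "\<one> = x [^] (0::int)" by simp
      hence "pow_adj G x \<one>" unfolding pow_adj_def using x(2) by blast
      thus False using n x one_closed unfolding null_graph_def by blast
    qed
  next
    assume "carrier G = {\<one>}"
    thus "null_graph (carrier G) (pow_adj G)" unfolding null_graph_def pow_adj_def by auto
  qed
  have B: "complete_graph (carrier G) (ngen_adj G) \<longleftrightarrow> \<not> two_generated G"
    if nt: "carrier G \<noteq> {\<one>}"
  proof
    assume c: "complete_graph (carrier G) (ngen_adj G)"
    show "\<not> two_generated G"
    proof
      assume "two_generated G"
      then obtain x y where xy: "x \<in> carrier G" "y \<in> carrier G" "generate G {x, y} = carrier G"
        unfolding two_generated_def by blast
      show False
      proof (cases "x = y")
        case True
        hence gx: "generate G {x} = carrier G" using xy by simp
        hence "x \<noteq> \<one>" using generate_one nt by auto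
        moreover have "generate G {x, \<one>} = carrier G"
        proof -
          have "generate G {x} \<subseteq> generate G {x, \<one>}" by (rule mono_generate) auto
          moreover have "generate G {x, \<one>} \<subseteq> carrier G" using xy by (intro generate_incl) auto
          ultimately show ?thesis using gx by auto
        qed
        moreover have "ngen_adj G x \<one>" if "x \<noteq> \<one>"
          using c xy(1) one_closed that unfolding complete_graph_def by blast
        ultimately show False unfolding ngen_adj_def by blast
      next
        case False
        hence "ngen_adj G x y" using c xy(1,2) unfolding complete_graph_def by blast
        thus False using xy(3) unfolding ngen_adj_def by blast
      qed
    qed
  next
    assume "\<not> two_generated G"
    thus "complete_graph (carrier G) (ngen_adj G)"
      unfolding two_generated_def complete_graph_def ngen_adj_def by blast
  qed
  have C: "same_graph (carrier G) (ngen_adj G) (com_adj G) \<longleftrightarrow>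
               ((comm_group G \<and> \<not> two_generated G) \<or> minimal_nonabelian G)"
    if nt: "carrier G \<noteq> {\<one>}"
  proof
    assume s: "same_graph (carrier G) (ngen_adj G) (com_adj G)"
    show "(comm_group G \<and> \<not> two_generated G) \<or> minimal_nonabelian G"
    proof (cases "comm_group G")
      case True
      then interpret comm_group G .
      have "complete_graph (carrier G) (ngen_adj G)"
        unfolding complete_graph_def
      proof (intro ballI impI)
        fix x y assume "x \<in> carrier G" "y \<in> carrier G" "x \<noteq> y"
        hence "com_adj G x y" unfolding com_adj_def using m_comm by simp
        thus "ngen_adj G x y" using s \<open>x \<in> carrier G\<close> \<open>y \<in> carrier G\<close>
          unfolding same_graph_def by blast
      qed
      hence "\<not> two_generated G" using B[OF nt] by simp
      thus ?thesis using True by simp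
    next
      case False
      have "\<forall>H. subgroup H G \<and> H \<noteq> carrier G \<longrightarrow>
        (\<forall>x\<in>H. \<forall>y\<in>H. x \<otimes> y = y \<otimes> x)"
      proof (intro allI impI ballI)
        fix H x y assume H: "subgroup H G \<and> H \<noteq> carrier G" and x: "x \<in> H" and y: "y \<in> H"
        show "x \<otimes> y = y \<otimes> x"
        proof (cases "x = y")
          case True thus ?thesis by simp
        next
          case False
          have sub: "H \<subseteq> carrier G" using H subgroup.subset by blast
          have "{x, y} \<subseteq> H" using x y by simp
          hence "generate G {x, y} \<subseteq> H" using H by (intro generate_subgroup_incl) auto
          hence "generate G {x, y} \<noteq> carrier G" using H sub by auto
          hence "ngen_adj G x y" using False unfolding ngen_adj_def by simp
          moreover have "x \<in> carrier G" "y \<in> carrier G" using x y sub by auto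
          ultimately have "com_adj G x y" using s unfolding same_graph_def by auto
          thus ?thesis unfolding com_adj_def by simp
        qed
      qed
      hence "minimal_nonabelian G" using False is_group unfolding minimal_nonabelian_def by simp
      thus ?thesis by simp
    qed
  next
    assume h: "(comm_group G \<and> \<not> two_generated G) \<or> minimal_nonabelian G"
    show "same_graph (carrier G) (ngen_adj G) (com_adj G)"
    proof (cases "comm_group G")
      case True
      then interpret comm_group G .
      have "\<not> minimal_nonabelian G" using True unfolding minimal_nonabelian_def by simp
      hence "\<not> two_generated G" using h by simp
      show ?thesis unfolding same_graph_def
      proof (intro ballI)
        fix x y assume x: "x \<in> carrier G" and y: "y \<in> carrier G"
        have "generate G {x, y} \<noteq> carrier G"
          using \<open>\<not> two_generated G\<close> x y unfolding two_generated_def by blast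
        thus "ngen_adj G x y \<longleftrightarrow> com_adj G x y"
          unfolding ngen_adj_def com_adj_def using m_comm x y by simp
      qed
    next
      case False
      hence mn: "minimal_nonabelian G" using h by simp
      show ?thesis unfolding same_graph_def
      proof (intro ballI)
        fix x y assume x: "x \<in> carrier G" and y: "y \<in> carrier G"
        show "ngen_adj G x y \<longleftrightarrow> com_adj G x y"
        proof
          assume "ngen_adj G x y"
          hence ne: "x \<noteq> y" and g: "generate G {x, y} \<noteq> carrier G" unfolding ngen_adj_def by auto
          have "subgroup (generate G {x, y}) G" using x y by (intro generate_is_subgroup) auto
          moreover have "x \<in> generate G {x, y}" "y \<in> generate G {x, y}"
            by (auto intro: generate.incl)
          moreover have "\<forall>H. subgroup H G \<and> H \<noteq> carrier G \<longrightarrow>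
            (\<forall>x\<in>H. \<forall>y\<in>H. x \<otimes> y = y \<otimes> x)" using mn unfolding minimal_nonabelian_def by simp
          ultimately have "x \<otimes> y = y \<otimes> x" using g by simp
          thus "com_adj G x y" using ne unfolding com_adj_def by simp
        next
          assume "com_adj G x y"
          hence ne: "x \<noteq> y" and c: "x \<otimes> y = y \<otimes> x" unfolding com_adj_def by auto
          have "generate G {x, y} \<noteq> carrier G"
            using commuting_gen_comm[OF x y c] False by auto
          thus "ngen_adj G x y" using ne unfolding ngen_adj_def by simp
        qed
      qed
    qed
  qed
  show ?thesis using A B C by simp
qed

theorem mainTheorem4:
  fixes G :: "('a, 'b) monoid_scheme"
  assumes "group G" and "finite (carrier G)"
  shows "(null_graph (carrier G) (pow_adj G) \<longleftrightarrow> carrier G = {\<one>\<^bsub>G\<^esub>})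
       \<and> (carrier G \<noteq> {\<one>\<^bsub>G\<^esub>} \<longrightarrow>
            (complete_graph (carrier G) (ngen_adj G) \<longleftrightarrow> \<not> two_generated G))
       \<and> (carrier G \<noteq> {\<one>\<^bsub>G\<^esub>} \<longrightarrow>
            (same_graph (carrier G) (ngen_adj G) (com_adj G) \<longleftrightarrow>
               ((comm_group G \<and> \<not> two_generated G) \<or> minimal_nonabelian G)))"
  using group.main_aux[OF assms(1)] .

end
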